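(* Let $\mathcal{D}$ be a distribution on $\mathbb{R}^d\times\mathbb{R}$ such that, for $(\mathbf{x},y)\sim\mathcal{D}$, $\|\mathbf{x}\|_2\le1$ and $|y|\le B$ with probability $1$, and suppose the second moments $\mathbb{E}_{\mathcal{D}}[x_i^2]$, $i\in[d]$, are known. Let $\bar{\mathbf{w}}$ be the output of DDAERR on $m$ i.i.d. examples from $\mathcal{D}$ with budget $k$, run with $\eta=\Big(m\big(\tfrac1k\|\mathbb{E}_{\mathcal{D}}[\mathbf{x}^2]\|_{1/2}+1\big)\Big)^{-1/2}$. Then for every $\mathbf{w}^*\in\mathbb{R}^d$ with $\|\mathbf{w}^*\|_2\le B$, $$\mathbb{E}_{\mathcal{D},A}\big[L_{\mathcal{D}}(\bar{\mathbf{w}})\big]\le L_{\mathcal{D}}(\mathbf{w}^* )+\frac{4B^2}{\sqrt m}\sqrt{\frac1k\|\mathbb{E}_{\mathcal{D}}[\mathbf{x}^2]\|_{1/2}+1}.$$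
   Context: Loss $\ell(\mathbf{w};\mathbf{x},y)=\frac12(\langle\mathbf{w},\mathbf{x}\rangle-y)^2$; risk $L_{\mathcal{D}}(\mathbf{w})=\mathbb{E}_{(\mathbf{x},y)\sim\mathcal{D}}[\ell(\mathbf{w};\mathbf{x},y)]$. $\mathbb{E}_{\mathcal{D}}[\mathbf{x}^2]$ is the vector with entries $\mathbb{E}_{\mathcal{D}}[x_i^2]$; for a vector $\mathbf{a}$, $\|\mathbf{a}\|_{1/2}=\big(\sum_{i=1}^d\sqrt{|a_i|}\big)^2$. Algorithm GAERR (parameters $B,\eta>0$, probabilities $q_i$ with $\sum_iq_i=1$, integer budget $k>0$; input $(\mathbf{x}_t,y_t)$, $t=1,\dots,m$): initialize $\mathbf{w}_1\ne0$, $\|\mathbf{w}_1\|_2\le B$ arbitrarily. For each $t$: for $r=1,\dots,k$ draw $i_{t,r}$ with probability $q_{i_{t,r}}$ and set $\widetilde{\mathbf{x}}_{t,r}=\frac{1}{q_{i_{t,r}}}\mathbf{x}_t[i_{t,r}]\mathbf{e}_{i_{t,r}}$; $\widetilde{\mathbf{x}}_t=\frac1k\sum_r\widetilde{\mathbf{x}}_{t,r}$; draw $j_t$ with probability $p_j=w_{t,j}^2/\|\mathbf{w}_t\|_2^2$ and set $\widetilde\phi_t=\frac{w_{t,j_t}}{p_{j_t}}\mathbf{x}_t[j_t]-y_t$; $\widetilde{\mathbf{g}}_t=\widetilde\phi_t\widetilde{\mathbf{x}}_t$; $\mathbf{v}_t=\mathbf{w}_t-\eta\widetilde{\mathbf{g}}_t$;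 $\mathbf{w}_{t+1}=\mathbf{v}_t B/\max\{\|\mathbf{v}_t\|_2,B\}$. Output $\bar{\mathbf{w}}=\frac1m\sum_{t=1}^m\mathbf{w}_t$. DDAERR is GAERR with $q_i=\sqrt{\mathbb{E}_{\mathcal{D}}[x_i^2]}\big/\sum_{j=1}^d\sqrt{\mathbb{E}_{\mathcal{D}}[x_j^2]}$. $\mathbb{E}_{\mathcal{D},A}$ is expectation over the examples and the algorithm's randomness. *)

theory Defs
  imports "HOL-Probability.Probability"
begin

definition second_moment :: "((real^'d::finite) \<times> real) measure \<Rightarrow> 'd \<Rightarrow> real" where
  "second_moment D i = (\<integral>z. (fst z $ i)^2 \<partial>D)"

definition half_norm :: "('d::finite \<Rightarrow> real) \<Rightarrow> real" where
  "half_norm a = (\<Sum>i\<in>UNIV. sqrt \<bar>a i\<bar>)^2"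

definition sq_loss :: "real^'d::finite \<Rightarrow> (real^'d) \<times> real \<Rightarrow> real" where
  "sq_loss w z = (1/2) * (w \<bullet> fst z - snd z)^2"

definition risk :: "((real^'d::finite) \<times> real) measure \<Rightarrow> real^'d \<Rightarrow> real" where
  "risk D w = (\<integral>z. sq_loss w z \<partial>D)"

primrec draws :: "'d pmf \<Rightarrow> nat \<Rightarrow> 'd list pmf" where
  "draws q 0 = return_pmf []"
| "draws q (Suc n) = bind_pmf q (\<lambda>i. map_pmf (\<lambda>is. i # is) (draws q n))"

text \<open>Distribution p_j = w_j^2 / ||w||^2 (meaningful for w \<noteq> 0).\<close>
definition weight_pmf :: "real^'d::finite \<Rightarrow> 'd pmf" where
  "weight_pmf w = embed_pmf (\<lambda>j. (w $ j)^2 / (norm w)^2)"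

text \<open>Estimate of <w,x> - y. Convention for w = 0 (not covered by the paper):
  the exact value -y is used.\<close>
definition phi_est :: "real^'d::finite \<Rightarrow> (real^'d) \<times> real \<Rightarrow> real pmf" where
  "phi_est w z = (if w = 0 then return_pmf (- snd z)
     else map_pmf (\<lambda>j. (w $ j / ((w $ j)^2 / (norm w)^2)) * (fst z $ j) - snd z) (weight_pmf w))"

definition gaerr_step ::
  "'d::finite pmf \<Rightarrow> real \<Rightarrow> real \<Rightarrow> nat \<Rightarrow> (real^'d) \<times> real \<Rightarrow> real^'d \<Rightarrow> (real^'d) pmf" where
  "gaerr_step q B \<eta> k z w =
     bind_pmf (draws q k) (\<lambda>is.
     bind_pmf (phi_est w z) (\<lambda>\<phi>.
       let xt = (1 / real k) *\<^sub>R (\<Sum>i\<leftarrow>is. ((fst z $ i) / pmf q i) *\<^sub>R axis i 1);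
           v = w - (\<eta> * \<phi>) *\<^sub>R xt
       in return_pmf ((B / max (norm v) B) *\<^sub>R v)))"

fun gaerr_iter ::
  "'d::finite pmf \<Rightarrow> real \<Rightarrow> real \<Rightarrow> nat \<Rightarrow> real^'d \<Rightarrow> ((real^'d) \<times> real) list \<Rightarrow> (real^'d) list pmf" where
  "gaerr_iter q B \<eta> k w [] = return_pmf []"
| "gaerr_iter q B \<eta> k w (z # zs) =
     bind_pmf (gaerr_step q B \<eta> k z w) (\<lambda>w'. map_pmf (\<lambda>ws. w # ws) (gaerr_iter q B \<eta> k w' zs))"

definition gaerr ::
  "'d::finite pmf \<Rightarrow> real \<Rightarrow> real \<Rightarrow> nat \<Rightarrow> real^'d \<Rightarrow> ((real^'d) \<times> real) list \<Rightarrow> (real^'d) pmf" where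
  "gaerr q B \<eta> k w1 zs = map_pmf (\<lambda>ws. (1 / real (length ws)) *\<^sub>R sum_list ws) (gaerr_iter q B \<eta> k w1 zs)"

text \<open>DDAERR sampling distribution q_i proportional to sqrt(E[x_i^2]).
  Convention: if all second moments vanish (x = 0 a.s.), the uniform distribution.\<close>
definition ddaerr_q :: "((real^'d::finite) \<times> real) measure \<Rightarrow> 'd pmf" where
  "ddaerr_q D = (let s = (\<Sum>j\<in>UNIV. sqrt (second_moment D j)) in
     if s = 0 then pmf_of_set UNIV else embed_pmf (\<lambda>i. sqrt (second_moment D i) / s))"

end

theory Submission
  imports Defs
begin


lemma set_draws: "set_pmf (draws q n) \<subseteq> {xs. length xs = n}"
  by (induction n) auto

lemma finite_len: "finite {xs::('d::finite) list. length xs = n}"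
  using finite_lists_length_eq[of "UNIV::'d set" n] by simp

lemma finite_draws: "finite (set_pmf (draws (q::'d::finite pmf) n))"
  using finite_subset[OF set_draws finite_len] .

lemma exp_draws_Suc:
  fixes h :: "'d::finite list \<Rightarrow> 'b::{banach, second_countable_topology}"
  shows "measure_pmf.expectation (draws q (Suc n)) h =
    (\<Sum>i\<in>UNIV. pmf q i *\<^sub>R measure_pmf.expectation (draws q n) (\<lambda>is. h (i#is)))"
  apply (simp only: draws.simps)
  apply (subst pmf_expectation_bind[where A=UNIV])
  apply (auto simp: finite_draws)
  done

definition U :: "'d::finite pmf \<Rightarrow> (real^'d) \<times> real \<Rightarrow> 'd list \<Rightarrow> real^'d" where
  "U q z is = (\<Sum>i\<leftarrow>is. ((fst z $ i) / pmf q i) *\<^sub>R axis i 1)"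

definition xp :: "'d::finite pmf \<Rightarrow> (real^'d) \<times> real \<Rightarrow> real^'d" where
  "xp q z = (\<chi> j. pmf q j * (fst z $ j / pmf q j))"

definition Aq :: "'d::finite pmf \<Rightarrow> (real^'d) \<times> real \<Rightarrow> real" where
  "Aq q z = (\<Sum>j\<in>UNIV. (fst z $ j)^2 / pmf q j)"

lemma sum_pmf_UNIV: "(\<Sum>i\<in>UNIV. pmf (q::'d::finite pmf) i) = 1"
  using sum_pmf_eq_1[of UNIV q] by simp

lemma U_Cons: "U q z (i#is) = ((fst z $ i) / pmf q i) *\<^sub>R axis i 1 + U q z is"
  by (simp add: U_def)

lemma sum_axis: "(\<Sum>i\<in>UNIV. c i *\<^sub>R axis i (1::real)) = (\<chi> i. c i :: real^'d::finite)"
  by (metis (no_types, lifting) UNIV_I basis_expansion scalar_mult_eq_scaleR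
    sum.cong vec_lambda_inverse)

lemma xp_sum: "(\<Sum>i\<in>UNIV. pmf q i *\<^sub>R (((fst z $ i) / pmf q i) *\<^sub>R axis i 1)) = xp q z"
  unfolding xp_def scaleR_scaleR by (rule sum_axis)

lemma exp_U: "measure_pmf.expectation (draws q n) (U q z) = real n *\<^sub>R xp q z"
proof (induction n)
  case 0 then show ?case by (simp add: U_def)
next
  case (Suc n)
  have "measure_pmf.expectation (draws q (Suc n)) (U q z) =
     (\<Sum>i\<in>UNIV. pmf q i *\<^sub>R (((fst z $ i) / pmf q i) *\<^sub>R axis i 1 + real n *\<^sub>R xp q z))"
    apply (subst exp_draws_Suc)
    apply (simp only: U_Cons)
    apply (subst Bochner_Integration.integral_add)
    apply (auto simp: integrable_measure_pmf_finite finite_draws Suc)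
    done
  also have "\<dots> = (\<Sum>i\<in>UNIV. pmf q i *\<^sub>R (((fst z $ i) / pmf q i) *\<^sub>R axis i 1)) + (\<Sum>i\<in>UNIV. pmf q i) *\<^sub>R (real n *\<^sub>R xp q z)"
    by (simp only: scaleR_add_right sum.distrib scaleR_sum_left)
  also have "\<dots> = xp q z + real n *\<^sub>R xp q z"
    by (simp only: xp_sum sum_pmf_UNIV scaleR_one)
  finally show ?case by (simp add: algebra_simps)
qed

lemma norm_axis_term: "(\<Sum>i\<in>UNIV. pmf q i * (norm (((fst z $ i) / pmf q i) *\<^sub>R axis i (1::real)))^2) = Aq q z"
  unfolding Aq_def
proof (intro sum.cong refl)
  fix i show "pmf q i * (norm (((fst z $ i) / pmf q i) *\<^sub>R axis i (1::real)))^2 = (fst z $ i)^2 / pmf q i"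
    by (cases "pmf q i = 0") (auto simp: power2_eq_square field_simps)
qed

lemma inner_xp: "(\<Sum>i\<in>UNIV. pmf q i * ((((fst z $ i) / pmf q i) *\<^sub>R axis i 1) \<bullet> v)) = xp q z \<bullet> v"
proof -
  have "(\<Sum>i\<in>UNIV. pmf q i * ((((fst z $ i) / pmf q i) *\<^sub>R axis i 1) \<bullet> v)) =
     (\<Sum>i\<in>UNIV. pmf q i *\<^sub>R (((fst z $ i) / pmf q i) *\<^sub>R axis i 1)) \<bullet> v"
    by (simp only: inner_sum_left inner_scaleR_left)
  then show ?thesis by (simp only: xp_sum)
qed

lemma normsq_add: "(norm (a+b::'a::real_inner))^2 = (norm a)^2 + 2*(a\<bullet>b) + (norm b)^2"
  by (simp add: power2_norm_eq_inner inner_add_left inner_add_right inner_commute)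

lemma exp_U2: "measure_pmf.expectation (draws q n) (\<lambda>is. (norm (U q z is))^2)
   = real n * Aq q z + real n * (real n - 1) * (norm (xp q z))^2"
proof (induction n)
  case 0 then show ?case by (simp add: U_def)
next
  case (Suc n)
  let ?u = "\<lambda>i. ((fst z $ i) / pmf q i) *\<^sub>R axis i (1::real)"
  have e: "\<And>i is. (norm (U q z (i#is)))^2 = (norm (?u i))^2 + 2 * (?u i \<bullet> U q z is) + (norm (U q z is))^2"
    by (simp only: U_Cons normsq_add)
  have "measure_pmf.expectation (draws q (Suc n)) (\<lambda>is. (norm (U q z is))^2) =
     (\<Sum>i\<in>UNIV. pmf q i * ((norm (?u i))^2 + 2 * (?u i \<bullet> (real n *\<^sub>R xp q z)) + (real n * Aq q z + real n * (real n - 1) * (norm (xp q z))^2)))"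
    apply (subst exp_draws_Suc)
    apply (simp only: e)
    apply (subst Bochner_Integration.integral_add, simp add: integrable_measure_pmf_finite finite_draws,
           simp add: integrable_measure_pmf_finite finite_draws)+
    apply (simp add: integrable_measure_pmf_finite finite_draws Suc exp_U mult.left_commute del: norm_scaleR)
    done
  also have "\<dots> = Aq q z + 2 * real n * (xp q z \<bullet> xp q z) + (real n * Aq q z + real n * (real n - 1) * (norm (xp q z))^2)"
  proof -
    have "(\<Sum>i\<in>UNIV. pmf q i * ((norm (?u i))^2 + 2 * (?u i \<bullet> (real n *\<^sub>R xp q z)) + (real n * Aq q z + real n * (real n - 1) * (norm (xp q z))^2)))
      = (\<Sum>i\<in>UNIV. pmf q i * (norm (?u i))^2) + 2 * (\<Sum>i\<in>UNIV. pmf q i * (?u i \<bullet> (real n *\<^sub>R xp q z)))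
        + (\<Sum>i\<in>UNIV. pmf q i) * (real n * Aq q z + real n * (real n - 1) * (norm (xp q z))^2)"
      by (simp only: distrib_left sum.distrib sum_distrib_right sum_distrib_left mult.left_commute)
    also have "\<dots> = Aq q z + 2 * (xp q z \<bullet> (real n *\<^sub>R xp q z)) + (real n * Aq q z + real n * (real n - 1) * (norm (xp q z))^2)"
      by (simp only: norm_axis_term inner_xp sum_pmf_UNIV mult_1)
    finally show ?thesis by simp
  qed
  finally show ?case by (simp add: power2_norm_eq_inner algebra_simps)
qed



lemma normsq_sum: "(norm (w::real^'d::finite))^2 = (\<Sum>j\<in>UNIV. (w$j)^2)"
proof -
  have "(norm w)^2 = w \<bullet> w" by (rule power2_norm_eq_inner)
  then show ?thesis by (simp add: inner_vec_def power2_eq_square)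
qed

lemma pmf_weight: assumes "w \<noteq> 0" shows "pmf (weight_pmf w) j = (w$j)^2 / (norm w)^2"
proof -
  have n: "(norm w)^2 > 0" using assms by simp
  show ?thesis unfolding weight_pmf_def
  proof (rule pmf_embed_pmf)
    show "\<And>x. 0 \<le> (w $ x)\<^sup>2 / (norm w)\<^sup>2" by simp
    have "(\<Sum>j\<in>UNIV. (w$j)^2 / (norm w)^2) = 1"
      using n by (simp add: sum_divide_distrib[symmetric] normsq_sum[symmetric])
    then show "(\<integral>\<^sup>+ x. ennreal ((w $ x)\<^sup>2 / (norm w)\<^sup>2) \<partial>count_space UNIV) = 1"
      by (simp add: nn_integral_count_space_finite sum_nonneg)
  qed
qed

definition pw :: "real^'d::finite \<Rightarrow> 'd \<Rightarrow> real" where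
  "pw w j = (w$j)^2 / (norm w)^2"

definition phj :: "real^'d::finite \<Rightarrow> (real^'d) \<times> real \<Rightarrow> 'd \<Rightarrow> real" where
  "phj w z j = (w $ j / ((w $ j)^2 / (norm w)^2)) * (fst z $ j) - snd z"

lemma exp_phi: fixes f :: "real \<Rightarrow> real"
  shows "measure_pmf.expectation (phi_est w z) f =
    (if w = 0 then f (- snd z) else (\<Sum>j\<in>UNIV. pw w j * f (phj w z j)))"
proof (cases "w = 0")
  case True then show ?thesis by (simp add: phi_est_def)
next
  case False
  then show ?thesis
    unfolding phi_est_def
    apply simp
    apply (subst integral_measure_pmf_real[where A=UNIV])
    apply (auto simp: pmf_weight pw_def phj_def mult.commute)
    done
qed

lemma sum_pw: "w \<noteq> 0 \<Longrightarrow> (\<Sum>j\<in>UNIV. pw w j) = 1"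
  by (simp add: pw_def sum_divide_distrib[symmetric] normsq_sum[symmetric])

lemma pw_term: "pw w j * (w $ j / ((w $ j)^2 / (norm w)^2)) = w $ j"
  by (cases "w $ j = 0") (auto simp: pw_def)

lemma exp_phi1: "measure_pmf.expectation (phi_est w z) (\<lambda>\<phi>. \<phi>) = w \<bullet> fst z - snd z"
proof (cases "w = 0")
  case True then show ?thesis by (simp add: exp_phi)
next
  case False
  have "(\<Sum>j\<in>UNIV. pw w j * phj w z j) = (\<Sum>j\<in>UNIV. (pw w j * (w $ j / ((w $ j)^2 / (norm w)^2))) * fst z $ j) - (\<Sum>j\<in>UNIV. pw w j) * snd z"
    by (simp add: phj_def right_diff_distrib sum_subtractf sum_distrib_right mult.assoc)
  also have "\<dots> = (\<Sum>j\<in>UNIV. w $ j * fst z $ j) - 1 * snd z"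
    by (simp only: pw_term sum_pw[OF False])
  also have "\<dots> = w \<bullet> fst z - snd z"
    by (simp add: inner_vec_def)
  finally show ?thesis using False by (simp add: exp_phi)
qed

lemma pw_term2: "pw w j * (w $ j / ((w $ j)^2 / (norm w)^2) * c)^2 \<le> (norm w)^2 * c^2"
proof (cases "w $ j = 0")
  case True then show ?thesis by (simp add: pw_def)
next
  case False
  then have "w \<noteq> 0" by auto
  then have "pw w j * (w $ j / ((w $ j)^2 / (norm w)^2) * c)^2 = (norm w)^2 * c^2"
    using False by (simp add: pw_def power2_eq_square field_simps)
  then show ?thesis by simp
qed

lemma exp_phi2:
  assumes "norm w \<le> B" "norm (fst z) \<le> 1" "\<bar>snd z\<bar> \<le> B"
  shows "measure_pmf.expectation (phi_est w z) (\<lambda>\<phi>. \<phi>^2) \<le> 4 * B^2"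
proof (cases "w = 0")
  case True
  have "(snd z)^2 \<le> B^2" using assms(3) by (metis abs_ge_zero power2_abs power_mono)
  moreover have "0 \<le> B^2" by simp
  ultimately have "(snd z)^2 \<le> 4 * B^2" by linarith
  then show ?thesis using True by (simp add: exp_phi)
next
  case False
  let ?a = "\<lambda>j. w $ j / ((w $ j)^2 / (norm w)^2) * fst z $ j"
  have "(\<Sum>j\<in>UNIV. pw w j * (phj w z j)^2) = (\<Sum>j\<in>UNIV. pw w j * (?a j)^2) - 2 * snd z * (\<Sum>j\<in>UNIV. pw w j * ?a j) + (\<Sum>j\<in>UNIV. pw w j) * (snd z)^2"
    by (simp add: phj_def power2_diff algebra_simps sum.distrib sum_subtractf sum_distrib_left sum_distrib_right)
  also have "(\<Sum>j\<in>UNIV. pw w j * ?a j) = w \<bullet> fst z"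
    by (simp only: pw_term inner_vec_def mult.assoc[symmetric] inner_real_def)
  also have "(\<Sum>j\<in>UNIV. pw w j * (?a j)^2) \<le> (norm w)^2 * (norm (fst z))^2"
  proof -
    have "(\<Sum>j\<in>UNIV. pw w j * (?a j)^2) \<le> (\<Sum>j\<in>UNIV. (norm w)^2 * (fst z $ j)^2)"
      by (intro sum_mono pw_term2)
    also have "\<dots> = (norm w)^2 * (norm (fst z))^2" by (simp add: normsq_sum[of "fst z"] sum_distrib_left)
    finally show ?thesis .
  qed
  finally have "(\<Sum>j\<in>UNIV. pw w j * (phj w z j)^2) \<le> (norm w)^2 * (norm (fst z))^2 - 2 * snd z * (w \<bullet> fst z) + (snd z)^2"
    using False by (simp add: sum_pw)
  also have "\<dots> \<le> (norm w * norm (fst z) + \<bar>snd z\<bar>)^2"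
  proof -
    have "- (snd z * (w \<bullet> fst z)) \<le> \<bar>snd z\<bar> * (norm w * norm (fst z))"
      using Cauchy_Schwarz_ineq2[of w "fst z"]
      by (metis abs_ge_zero abs_le_D2 abs_mult mult_left_mono order_trans)
    then show ?thesis by (simp add: power2_sum power_mult_distrib algebra_simps)
  qed
  also have "\<dots> \<le> (B + B)^2"
  proof (intro power_mono add_mono)
    show "norm w * norm (fst z) \<le> B" using assms mult_mono[of "norm w" B "norm (fst z)" 1] by simp
  qed (use assms in auto)
  finally show ?thesis using False by (simp add: exp_phi power2_eq_square)
qed



definition Tst :: "'d::finite pmf \<Rightarrow> real \<Rightarrow> real \<Rightarrow> nat \<Rightarrow> (real^'d) \<times> real \<Rightarrow> real^'d \<Rightarrow> 'd list \<Rightarrow> real \<Rightarrow> real^'d" where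
  "Tst q B \<eta> k z w is \<phi> = (let v = w - (\<eta> * \<phi>) *\<^sub>R ((1 / real k) *\<^sub>R U q z is) in (B / max (norm v) B) *\<^sub>R v)"

lemma step_eq: "gaerr_step q B \<eta> k z w =
  bind_pmf (draws q k) (\<lambda>is. bind_pmf (phi_est w z) (\<lambda>\<phi>. return_pmf (Tst q B \<eta> k z w is \<phi>)))"
  by (simp add: gaerr_step_def Tst_def U_def Let_def)

lemma finite_phi: "finite (set_pmf (phi_est (w::real^'d::finite) z))"
  by (auto simp: phi_est_def intro: finite_subset[of _ "UNIV::'d set"])

lemma proj_norm: assumes "B > 0" shows "norm ((B / max (norm v) B) *\<^sub>R v) \<le> B"
proof (cases "norm v \<le> B")
  case True then show ?thesis using assms by (simp add: max_def)
next
  case False then show ?thesis using assms by (simp add: max_def)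
qed

lemma proj_contr:
  fixes v ws :: "'a::real_inner"
  assumes "B > 0" "norm ws \<le> B"
  shows "(norm ((B / max (norm v) B) *\<^sub>R v - ws))^2 \<le> (norm (v - ws))^2"
proof (cases "norm v \<le> B")
  case True then show ?thesis using assms by (simp add: max_def)
next
  case False
  define c where "c = B / norm v"
  have nv: "norm v > B" using False by simp
  then have c: "0 < c" "c < 1" using assms by (auto simp: c_def divide_less_eq intro!: divide_pos_pos)
  have eq: "(B / max (norm v) B) *\<^sub>R v = c *\<^sub>R v" using nv by (simp add: c_def max_def)
  have cs: "v \<bullet> ws \<le> norm v * B"
    using Cauchy_Schwarz_ineq2[of v ws] assms(2) by (smt (verit) mult_left_mono norm_ge_zero abs_le_D1)
  have key: "c * norm v = B" using nv assms by (auto simp: c_def)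
  have A: "(norm (v - ws))^2 - (norm (c *\<^sub>R v - ws))^2 = (1 - c) * ((1 + c) * (norm v)^2 - 2 * (v \<bullet> ws))"
  proof -
    have e1: "(norm (v - ws))^2 = v\<bullet>v - 2*(v\<bullet>ws) + ws\<bullet>ws"
      by (simp only: power2_norm_eq_inner inner_diff_left inner_diff_right inner_commute[of ws v], (simp add: algebra_simps)?)
    have e2: "(norm (c *\<^sub>R v - ws))^2 = c*c*(v\<bullet>v) - 2*c*(v\<bullet>ws) + ws\<bullet>ws"
      by (simp only: power2_norm_eq_inner inner_diff_left inner_diff_right inner_commute[of ws v] inner_scaleR_left inner_scaleR_right, (simp add: algebra_simps)?)
    have e3: "(norm v)^2 = v\<bullet>v" by (rule power2_norm_eq_inner)
    show ?thesis unfolding e1 e2 e3 by (simp add: algebra_simps)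
  qed
  have "(1 + c) * (norm v)^2 - 2 * (v \<bullet> ws) \<ge> (1 + c) * (norm v)^2 - 2 * (norm v * B)"
    using cs by simp
  moreover have "(1 + c) * (norm v)^2 - 2 * (norm v * B) = norm v * (norm v - B)"
    using key by (simp add: power2_eq_square algebra_simps)
  moreover have "norm v * (norm v - B) \<ge> 0" using nv assms by simp
  ultimately have "(1 - c) * ((1 + c) * (norm v)^2 - 2 * (v \<bullet> ws)) \<ge> 0"
    using c by (intro mult_nonneg_nonneg) auto
  then have "(norm (c *\<^sub>R v - ws))^2 \<le> (norm (v - ws))^2" using A by linarith
  then show ?thesis unfolding eq .
qed

lemma exp_quad_phi:
  "measure_pmf.expectation (phi_est w z) (\<lambda>\<phi>. a - b * \<phi> + c * \<phi>^2) =
   a - b * measure_pmf.expectation (phi_est w z) (\<lambda>\<phi>. \<phi>) + c * measure_pmf.expectation (phi_est w z) (\<lambda>\<phi>. \<phi>^2)"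
  by (simp add: integrable_measure_pmf_finite finite_phi Bochner_Integration.integral_add Bochner_Integration.integral_diff)

lemma exp_quad_draws:
  "measure_pmf.expectation (draws q n) (\<lambda>is. a - b * (U q z is \<bullet> d) + c * (norm (U q z is))^2) =
   a - b * (measure_pmf.expectation (draws q n) (U q z) \<bullet> d) + c * measure_pmf.expectation (draws q n) (\<lambda>is. (norm (U q z is))^2)"
proof -
  have i: "integrable (measure_pmf (draws q n)) f" for f :: "_ \<Rightarrow> 'b::{banach, second_countable_topology}"
    by (simp add: integrable_measure_pmf_finite finite_draws)
  have "measure_pmf.expectation (draws q n) (\<lambda>is. U q z is \<bullet> d) = measure_pmf.expectation (draws q n) (U q z) \<bullet> d"
    using integral_inner_right[of d "measure_pmf (draws q n)" "U q z", OF i] by (simp add: inner_commute)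
  then show ?thesis
    by (simp add: i Bochner_Integration.integral_add Bochner_Integration.integral_diff)
qed

lemma Aq_nonneg: "Aq q z \<ge> 0"
  unfolding Aq_def by (intro sum_nonneg divide_nonneg_nonneg) auto

lemma norm_xp: "norm (xp q z) \<le> norm (fst z)"
proof (rule norm_le_componentwise_cart)
  fix j show "norm (xp q z $ j) \<le> norm (fst z $ j)"
    by (cases "pmf q j = 0") (auto simp: xp_def)
qed

lemma one_step:
  fixes ws w :: "real^'d::finite"
  assumes B: "B > 0" and ws: "norm ws \<le> B" and w: "norm w \<le> B"
    and x: "norm (fst z) \<le> 1" and y: "\<bar>snd z\<bar> \<le> B" and k: "k > 0" and eta: "\<eta> \<ge> 0"
  shows "(\<integral>\<^sup>+w'. ennreal ((norm (w' - ws))^2) \<partial>gaerr_step q B \<eta> k z w) \<le>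
    ennreal ((norm (w - ws))^2 - 2*\<eta>*((w \<bullet> fst z - snd z) * (xp q z \<bullet> (w - ws)))
       + \<eta>^2 * (4*B^2) * (Aq q z / real k + (norm (fst z))^2)) \<and>
    0 \<le> (norm (w - ws))^2 - 2*\<eta>*((w \<bullet> fst z - snd z) * (xp q z \<bullet> (w - ws)))
       + \<eta>^2 * (4*B^2) * (Aq q z / real k + (norm (fst z))^2)"
proof -
  define d where "d = w - ws"
  define e1 where "e1 = measure_pmf.expectation (phi_est w z) (\<lambda>\<phi>. \<phi>)"
  define e2 where "e2 = measure_pmf.expectation (phi_est w z) (\<lambda>\<phi>. \<phi>^2)"
  define V where "V ks \<phi> = w - (\<eta> * \<phi>) *\<^sub>R ((1 / real k) *\<^sub>R U q z ks)" for ks \<phi>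
  define Q where "Q ks \<phi> = (norm (V ks \<phi> - ws))^2" for ks \<phi>
  have Qe: "Q ks \<phi> = (norm d)^2 - (2*\<eta>/real k * (U q z ks \<bullet> d)) * \<phi> + ((\<eta>/real k)^2 * (norm (U q z ks))^2) * \<phi>^2" for ks \<phi>
  proof -
    have h: "V ks \<phi> - ws = d + (- (\<eta> * \<phi> / real k)) *\<^sub>R U q z ks" by (simp add: V_def d_def algebra_simps)
    have "(norm (U q z ks \<bullet> d)) = norm (d \<bullet> U q z ks)" by (simp add: inner_commute)
    show ?thesis unfolding Q_def h normsq_add inner_scaleR_right norm_scaleR power_mult_distrib inner_commute[of d]
      by (simp add: power2_eq_square field_simps)
  qed
  have "(\<integral>\<^sup>+w'. ennreal ((norm (w' - ws))^2) \<partial>gaerr_step q B \<eta> k z w) =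
     (\<integral>\<^sup>+ks. \<integral>\<^sup>+\<phi>. ennreal ((norm (Tst q B \<eta> k z w ks \<phi> - ws))^2) \<partial>phi_est w z \<partial>draws q k)"
    by (simp add: step_eq)
  also have "\<dots> \<le> (\<integral>\<^sup>+ks. \<integral>\<^sup>+\<phi>. ennreal (Q ks \<phi>) \<partial>phi_est w z \<partial>draws q k)"
  proof (intro nn_integral_mono ennreal_leI)
    fix ks \<phi>
    show "(norm (Tst q B \<eta> k z w ks \<phi> - ws))^2 \<le> Q ks \<phi>"
      unfolding Q_def Tst_def Let_def V_def[symmetric] using proj_contr[OF B ws] by simp
  qed
  also have "\<dots> = (\<integral>\<^sup>+ks. ennreal (measure_pmf.expectation (phi_est w z) (Q ks)) \<partial>draws q k)"
    by (intro nn_integral_cong nn_integral_eq_integral)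
       (auto simp: integrable_measure_pmf_finite finite_phi Q_def)
  also have "\<dots> = ennreal (measure_pmf.expectation (draws q k) (\<lambda>ks. measure_pmf.expectation (phi_est w z) (Q ks)))"
    by (intro nn_integral_eq_integral)
       (auto simp: integrable_measure_pmf_finite finite_draws Q_def intro!: integral_nonneg_AE)
  finally have S1: "(\<integral>\<^sup>+w'. ennreal ((norm (w' - ws))^2) \<partial>gaerr_step q B \<eta> k z w) \<le> ennreal (measure_pmf.expectation (draws q k) (\<lambda>ks. measure_pmf.expectation (phi_est w z) (Q ks)))" .
  have E0: "0 \<le> measure_pmf.expectation (draws q k) (\<lambda>ks. measure_pmf.expectation (phi_est w z) (Q ks))"
    by (auto simp: Q_def intro!: integral_nonneg_AE)
  have "measure_pmf.expectation (draws q k) (\<lambda>ks. measure_pmf.expectation (phi_est w z) (Q ks))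
     = measure_pmf.expectation (draws q k) (\<lambda>ks. (norm d)^2 - (2*\<eta>/real k*e1) * (U q z ks \<bullet> d) + ((\<eta>/real k)^2*e2) * (norm (U q z ks))^2)"
    unfolding Qe exp_quad_phi e1_def e2_def by (simp add: algebra_simps)
  also have "\<dots> = (norm d)^2 - (2*\<eta>/real k*e1) * (real k *\<^sub>R xp q z \<bullet> d)
      + ((\<eta>/real k)^2*e2) * (real k * Aq q z + real k * (real k - 1) * (norm (xp q z))^2)"
    unfolding exp_quad_draws exp_U exp_U2 ..
  also have "\<dots> = (norm d)^2 - 2*\<eta>*(e1 * (xp q z \<bullet> d)) + \<eta>^2 * e2 * (Aq q z / real k + (real k - 1) / real k * (norm (xp q z))^2)"
    using k by (simp add: power2_eq_square field_simps)
  also have "\<dots> \<le> (norm d)^2 - 2*\<eta>*(e1 * (xp q z \<bullet> d)) + \<eta>^2 * (4*B^2) * (Aq q z / real k + (norm (fst z))^2)"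
  proof -
    have e2b: "e2 \<le> 4*B^2" unfolding e2_def by (rule exp_phi2[OF w x y])
    have e2n: "e2 \<ge> 0" unfolding e2_def by (rule integral_nonneg_AE) auto
    have t0: "0 \<le> Aq q z / real k + (real k - 1) / real k * (norm (xp q z))^2"
      using k Aq_nonneg[of q z] by (intro add_nonneg_nonneg mult_nonneg_nonneg divide_nonneg_nonneg) auto
    have "(real k - 1) / real k * (norm (xp q z))^2 \<le> 1 * (norm (fst z))^2"
    proof (rule mult_mono)
      show "(real k - 1) / real k \<le> 1" using k by simp
      show "(norm (xp q z))^2 \<le> (norm (fst z))^2" using norm_xp by (simp add: power_mono)
    qed auto
    then have t1: "Aq q z / real k + (real k - 1) / real k * (norm (xp q z))^2 \<le> Aq q z / real k + (norm (fst z))^2"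
      by simp
    have "e2 * (Aq q z / real k + (real k - 1) / real k * (norm (xp q z))^2) \<le> (4*B^2) * (Aq q z / real k + (norm (fst z))^2)"
      using e2b e2n t0 t1 by (intro mult_mono) auto
    then have "\<eta>^2 * (e2 * (Aq q z / real k + (real k - 1) / real k * (norm (xp q z))^2)) \<le> \<eta>^2 * ((4*B^2) * (Aq q z / real k + (norm (fst z))^2))"
      by (intro mult_left_mono) auto
    then show ?thesis by (simp add: mult.assoc)
  qed
  finally have E1: "measure_pmf.expectation (draws q k) (\<lambda>ks. measure_pmf.expectation (phi_est w z) (Q ks)) \<le>
      (norm d)^2 - 2*\<eta>*(e1 * (xp q z \<bullet> d)) + \<eta>^2 * (4*B^2) * (Aq q z / real k + (norm (fst z))^2)" .
  have "ennreal (measure_pmf.expectation (draws q k) (\<lambda>ks. measure_pmf.expectation (phi_est w z) (Q ks))) \<le>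
      ennreal ((norm d)^2 - 2*\<eta>*(e1 * (xp q z \<bullet> d)) + \<eta>^2 * (4*B^2) * (Aq q z / real k + (norm (fst z))^2))"
    using E1 by (rule ennreal_leI)
  with S1 have "(\<integral>\<^sup>+w'. ennreal ((norm (w' - ws))^2) \<partial>gaerr_step q B \<eta> k z w) \<le>
      ennreal ((norm d)^2 - 2*\<eta>*(e1 * (xp q z \<bullet> d)) + \<eta>^2 * (4*B^2) * (Aq q z / real k + (norm (fst z))^2))"
    by (rule order_trans)
  moreover have "0 \<le> (norm d)^2 - 2*\<eta>*(e1 * (xp q z \<bullet> d)) + \<eta>^2 * (4*B^2) * (Aq q z / real k + (norm (fst z))^2)"
    using E0 E1 by linarith
  ultimately show ?thesis unfolding e1_def exp_phi1 d_def by simp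
qed



lemma meas_vec_nth[measurable]: "(\<lambda>x::real^'d::finite. x $ j) \<in> borel_measurable borel"
  by (intro borel_measurable_continuous_onI continuous_intros)

lemma meas_phj: "(\<lambda>(w, z). phj w z j) \<in> borel_measurable (borel \<Otimes>\<^sub>M (borel \<Otimes>\<^sub>M borel))"
  unfolding phj_def by measurable

lemma meas_pw: "(\<lambda>w. pw w j) \<in> borel_measurable borel"
  unfolding pw_def by measurable

lemma cont_U: "continuous_on UNIV (\<lambda>z. U q z ks)"
proof (induction ks)
  case Nil then show ?case by (simp add: U_def)
next
  case (Cons i ks) then show ?case unfolding U_Cons divide_inverse by (intro continuous_intros) auto
qed

lemma cont_T: assumes "B > 0"
  shows "continuous_on UNIV (\<lambda>(z, w, \<phi>). Tst q B \<eta> k z w ks \<phi>)"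
  unfolding Tst_def Let_def split_beta
  using assms
  by (intro continuous_intros continuous_on_compose2[OF cont_U]) auto

definition PEn :: "(real \<Rightarrow> ennreal) \<Rightarrow> real^'d::finite \<Rightarrow> (real^'d) \<times> real \<Rightarrow> ennreal" where
  "PEn g w z = (if w = 0 then g (- snd z) else (\<Sum>j\<in>UNIV. ennreal (pw w j) * g (phj w z j)))"

lemma nn_phi: "(\<integral>\<^sup>+\<phi>. g \<phi> \<partial>phi_est w z) = PEn g w z"
proof (cases "w = 0")
  case True then show ?thesis by (simp add: phi_est_def PEn_def)
next
  case False
  then show ?thesis
    unfolding phi_est_def PEn_def
    apply simp
    apply (subst nn_integral_measure_pmf_support[where A=UNIV])
    apply (auto simp: pmf_weight pw_def phj_def mult.commute)
    done
qed

lemma nn_draws: fixes q :: "'d::finite pmf" shows "(\<integral>\<^sup>+ks. G ks \<partial>draws q k) = (\<Sum>ks\<in>{xs. length xs = k}. ennreal (pmf (draws q k) ks) * G ks)"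
  apply (subst nn_integral_measure_pmf_support[where A="{xs. length xs = k}"])
  using set_draws[of q k] by (auto simp: finite_len mult.commute)

lemma nn_step: "(\<integral>\<^sup>+w'. h w' \<partial>gaerr_step q B \<eta> k z w) =
  (\<Sum>ks\<in>{xs. length xs = k}. ennreal (pmf (draws q k) ks) * PEn (\<lambda>\<phi>. h (Tst q B \<eta> k z w ks \<phi>)) w z)"
  by (simp add: step_eq nn_draws nn_phi)

lemma meas_T: "B > 0 \<Longrightarrow> (\<lambda>x. Tst q B \<eta> k (fst x) (fst (snd x)) ks (snd (snd x))) \<in> borel_measurable (borel \<Otimes>\<^sub>M (borel \<Otimes>\<^sub>M borel))"
proof -
  assume B: "B > 0"
  have e: "(\<lambda>(z, w, \<phi>). Tst q B \<eta> k z w ks \<phi>) = (\<lambda>x. Tst q B \<eta> k (fst x) (fst (snd x)) ks (snd (snd x)))"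
    by (rule ext) (simp add: split_beta)
  show ?thesis
    using borel_measurable_continuous_onI[OF cont_T[OF B, of q \<eta> k ks]]
    unfolding e by (simp add: borel_prod)
qed

lemma meas_step:
  fixes H :: "real^'d::finite \<Rightarrow> 'a \<Rightarrow> ennreal"
  assumes B: "B > 0" and H[measurable]: "(\<lambda>(w', y). H w' y) \<in> borel_measurable (borel \<Otimes>\<^sub>M N)"
    and Z[measurable]: "Zf \<in> measurable N borel"
  shows "(\<lambda>(w, y). \<integral>\<^sup>+w'. H w' y \<partial>gaerr_step q B \<eta> k (Zf y) w) \<in> borel_measurable (borel \<Otimes>\<^sub>M N)"
proof -
  have T[measurable]: "(\<lambda>x. Tst q B \<eta> k (fst x) (fst (snd x)) ks (snd (snd x))) \<in> borel_measurable (borel \<Otimes>\<^sub>M (borel \<Otimes>\<^sub>M borel))" for ks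
    using meas_T[OF B] .
  have P[measurable]: "(\<lambda>x. phj (fst x) (snd x) j) \<in> borel_measurable (borel \<Otimes>\<^sub>M borel)" for j
  proof -
    have e: "(\<lambda>(w, z). phj w z j) = (\<lambda>x. phj (fst x) (snd x) j)" by (rule ext) (simp add: split_beta)
    show ?thesis using meas_phj[of j] unfolding e by (simp add: borel_prod)
  qed
  have W[measurable]: "(\<lambda>w. pw w j) \<in> borel_measurable borel" for j by (rule meas_pw)
  have T2: "(\<lambda>x. Tst q B \<eta> k (Zf (snd x)) (fst x) ks (phj (fst x) (Zf (snd x)) j)) \<in> borel_measurable (borel \<Otimes>\<^sub>M N)" for ks j
  proof -
    have g0: "(\<lambda>x. (fst x, Zf (snd x))) \<in> measurable (borel \<Otimes>\<^sub>M N) (borel \<Otimes>\<^sub>M borel)" by measurable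
    have [measurable]: "(\<lambda>x. phj (fst x) (Zf (snd x)) j) \<in> borel_measurable (borel \<Otimes>\<^sub>M N)"
      using measurable_compose[OF g0 P[of j]] by simp
    have g: "(\<lambda>x. (Zf (snd x), fst x, phj (fst x) (Zf (snd x)) j)) \<in> measurable (borel \<Otimes>\<^sub>M N) (borel \<Otimes>\<^sub>M (borel \<Otimes>\<^sub>M borel))"
      by measurable
    show ?thesis using measurable_compose[OF g T[of ks]] by simp
  qed
  have T3: "(\<lambda>x. Tst q B \<eta> k (Zf (snd x)) (fst x) ks (- snd (Zf (snd x)))) \<in> borel_measurable (borel \<Otimes>\<^sub>M N)" for ks
  proof -
    have sn: "(\<lambda>z::(real^'d) \<times> real. snd z) \<in> borel_measurable borel"
      by (intro borel_measurable_continuous_onI continuous_intros)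
    have [measurable]: "(\<lambda>x. snd (Zf (snd x))) \<in> borel_measurable (borel \<Otimes>\<^sub>M N)"
      using measurable_compose[OF _ sn, of "\<lambda>x. Zf (snd x)"] by measurable
    have g: "(\<lambda>x. (Zf (snd x), fst x, - snd (Zf (snd x)))) \<in> measurable (borel \<Otimes>\<^sub>M N) (borel \<Otimes>\<^sub>M (borel \<Otimes>\<^sub>M borel))"
      by measurable
    show ?thesis using measurable_compose[OF g T[of ks]] by simp
  qed
  show ?thesis
    unfolding nn_step PEn_def split_beta
    using T2 T3 by measurable
qed



locale setting =
  fixes D :: "((real^'d::finite) \<times> real) measure" and B :: real
  assumes P: "prob_space D" and SD: "sets D = sets borel"
    and AEb: "AE z in D. norm (fst z) \<le> 1 \<and> \<bar>snd z\<bar> \<le> B" and Bpos: "B > 0"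
begin

interpretation D: prob_space D by (rule P)

lemma measD: fixes f :: "_ \<Rightarrow> 'b::topological_space" shows "f \<in> borel_measurable borel \<Longrightarrow> f \<in> borel_measurable D"
proof -
  have "measurable D borel = measurable borel (borel::'b measure)" by (rule measurable_cong_sets[OF SD refl])
  then show "f \<in> borel_measurable borel \<Longrightarrow> f \<in> borel_measurable D" by simp
qed

lemma measD2: "f \<in> measurable N D \<longleftrightarrow> f \<in> measurable N borel"
proof -
  have "measurable N D = measurable N borel" by (rule measurable_cong_sets[OF refl SD])
  then show ?thesis by simp
qed

lemma cont_sq: "continuous_on UNIV (\<lambda>(w, z). sq_loss w z)"
  unfolding sq_loss_def split_beta by (intro continuous_intros)

lemma meas_sq: "(\<lambda>z. sq_loss w z) \<in> borel_measurable D"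
  unfolding sq_loss_def by (intro measD borel_measurable_continuous_onI continuous_intros)

lemma int_sq: "integrable D (\<lambda>z. sq_loss w z)"
proof (rule D.integrable_const_bound[where B="(norm w + B)^2 / 2"])
  show "AE x in D. norm (sq_loss w x) \<le> (norm w + B)\<^sup>2 / 2"
    using AEb
  proof eventually_elim
    case (elim z)
    have "\<bar>w \<bullet> fst z\<bar> \<le> norm w * norm (fst z)" by (rule Cauchy_Schwarz_ineq2)
    also have "\<dots> \<le> norm w" using elim mult_left_mono[of "norm (fst z)" 1 "norm w"] by simp
    finally have "\<bar>w \<bullet> fst z - snd z\<bar> \<le> norm w + B" using elim by linarith
    then have "(w \<bullet> fst z - snd z)^2 \<le> (norm w + B)^2"
      by (metis abs_ge_zero power2_abs power_mono)
    then show ?case by (simp add: sq_loss_def)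
  qed
qed (rule meas_sq)

lemma risk_nonneg: "risk D w \<ge> 0"
  unfolding risk_def sq_loss_def by (intro integral_nonneg_AE) auto

lemma meas_risk: "(\<lambda>w. risk D w) \<in> borel_measurable borel"
proof -
  have m: "(\<lambda>(w, z). sq_loss w z) \<in> borel_measurable (borel \<Otimes>\<^sub>M borel)"
    using borel_measurable_continuous_onI[OF cont_sq] by (simp add: borel_prod)
  have eq: "measurable ((borel::(real^'d) measure) \<Otimes>\<^sub>M D) (borel::real measure) = measurable (borel \<Otimes>\<^sub>M borel) borel"
    by (rule measurable_cong_sets[OF sets_pair_measure_cong[OF refl SD] refl])
  have "(\<lambda>(w, z). sq_loss w z) \<in> borel_measurable (borel \<Otimes>\<^sub>M D)"
    by (subst measurable_cong_sets[OF sets_pair_measure_cong[OF refl SD] refl]) (rule m)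
  then show ?thesis unfolding risk_def by (rule D.borel_measurable_lebesgue_integral)
qed

lemma meas_comp: "(\<lambda>z. fst z $ j) \<in> borel_measurable D"
  by (intro measD borel_measurable_continuous_onI continuous_intros)

lemma int_comp2: "integrable D (\<lambda>z. (fst z $ j)^2)"
proof (rule D.integrable_const_bound[where B=1])
  show "AE x in D. norm ((fst x $ j)^2) \<le> 1"
    using AEb
  proof eventually_elim
    case (elim z)
    have "\<bar>fst z $ j\<bar> \<le> norm (fst z)" by (rule component_le_norm_cart)
    then have "\<bar>fst z $ j\<bar> \<le> 1" using elim by linarith
    then show ?case by (simp add: abs_square_le_1)
  qed
qed (intro measD borel_measurable_continuous_onI continuous_intros)

lemma sm_nonneg: "second_moment D j \<ge> 0"
  unfolding second_moment_def by (intro integral_nonneg_AE) auto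

lemma sm_zero: "second_moment D j = 0 \<Longrightarrow> AE z in D. fst z $ j = 0"
  using integral_nonneg_eq_0_iff_AE[OF int_comp2[of j]] unfolding second_moment_def by simp

end


lemma nn_aff:
  fixes p :: "'a pmf"
  assumes S: "(\<integral>\<^sup>+x. ennreal (f x) \<partial>p) \<le> ennreal R" and f: "\<And>x. f x \<ge> 0"
    and K: "K \<ge> 0" and c: "c \<ge> 0" and R: "R \<ge> 0"
  shows "(\<integral>\<^sup>+x. ennreal (K + c * f x) \<partial>p) \<le> ennreal (K + c * R)"
proof -
  have "(\<integral>\<^sup>+x. ennreal (K + c * f x) \<partial>p) = (\<integral>\<^sup>+x. ennreal K + ennreal c * ennreal (f x) \<partial>p)"
    using K c f by (intro nn_integral_cong) (simp add: ennreal_plus ennreal_mult)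
  also have "\<dots> = ennreal K + ennreal c * (\<integral>\<^sup>+x. ennreal (f x) \<partial>p)"
    by (simp add: nn_integral_add nn_integral_cmult measure_pmf.emeasure_space_1)
  also have "\<dots> \<le> ennreal K + ennreal c * ennreal R"
    using S by (intro add_left_mono mult_left_mono) auto
  also have "\<dots> = ennreal (K + c * R)"
    using K c R by (simp add: ennreal_plus ennreal_mult)
  finally show ?thesis .
qed

context setting
begin

interpretation D: prob_space D by (rule P)

abbreviation "sm \<equiv> second_moment D"
abbreviation "sS \<equiv> (\<Sum>j\<in>UNIV. sqrt (second_moment D j))"
abbreviation "qD \<equiv> ddaerr_q D"

lemma sS_nonneg: "sS \<ge> 0" by (intro sum_nonneg) (auto simp: sm_nonneg)

lemma pmf_q: "pmf qD j = (if sS = 0 then 1 / real CARD('d) else sqrt (sm j) / sS)"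
proof (cases "sS = 0")
  case True then show ?thesis by (simp add: ddaerr_q_def Let_def pmf_of_set)
next
  case False
  then have pos: "sS > 0" using sS_nonneg by simp
  have "pmf (embed_pmf (\<lambda>i. sqrt (sm i) / sS)) j = sqrt (sm j) / sS"
  proof (rule pmf_embed_pmf)
    show "\<And>x. 0 \<le> sqrt (sm x) / sS" using pos sm_nonneg by simp
    have "(\<Sum>i\<in>UNIV. sqrt (sm i) / sS) = 1" using False by (simp add: sum_divide_distrib[symmetric])
    then show "(\<integral>\<^sup>+ x. ennreal (sqrt (sm x) / sS) \<partial>count_space UNIV) = 1"
      by (simp add: nn_integral_count_space_finite sum_nonneg pos sm_nonneg)
  qed
  then show ?thesis using False by (simp add: ddaerr_q_def Let_def)
qed

lemma q_zero: "pmf qD j = 0 \<Longrightarrow> sm j = 0"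
  by (cases "sS = 0") (auto simp: pmf_q sm_nonneg)

lemma sum_sm_q: "(\<Sum>j\<in>UNIV. sm j / pmf qD j) \<le> half_norm sm"
proof (cases "sS = 0")
  case True
  then have "\<forall>j\<in>UNIV. sqrt (sm j) = 0"
    using sum_nonneg_eq_0_iff[of UNIV "\<lambda>j. sqrt (sm j)"] sm_nonneg by simp
  then have "\<And>j. sm j = 0" by simp
  then show ?thesis by (simp add: half_norm_def)
next
  case False
  have "(\<Sum>j\<in>UNIV. sm j / pmf qD j) = (\<Sum>j\<in>UNIV. sS * sqrt (sm j))"
  proof (intro sum.cong refl)
    fix j
    show "sm j / pmf qD j = sS * sqrt (sm j)"
    proof (cases "sm j = 0")
      case True then show ?thesis by simp
    next
      case F2: False
      have "sqrt (sm j) * sqrt (sm j) = sm j" using sm_nonneg[of j] by simp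
      then show ?thesis using False F2 by (simp add: pmf_q field_simps)
    qed
  qed
  also have "\<dots> = half_norm sm"
    by (simp add: half_norm_def sum_distrib_left[symmetric] power2_eq_square abs_of_nonneg sm_nonneg)
  finally show ?thesis by simp
qed

lemma AE_xp: "AE z in D. xp qD z = fst z"
proof -
  have "\<forall>j\<in>UNIV. AE z in D. pmf qD j = 0 \<longrightarrow> fst z $ j = 0"
  proof
    fix j
    show "AE z in D. pmf qD j = 0 \<longrightarrow> fst z $ j = 0"
    proof (cases "pmf qD j = 0")
      case True then show ?thesis using sm_zero[OF q_zero[OF True]] by simp
    qed simp
  qed
  then have "AE z in D. \<forall>j\<in>UNIV. pmf qD j = 0 \<longrightarrow> fst z $ j = 0"
    by (subst AE_finite_all) auto
  then show ?thesis
    by eventually_elim (auto simp: xp_def vec_eq_iff)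
qed


lemma cont_xp: "continuous_on UNIV (\<lambda>z. xp q z)"
  unfolding xp_def divide_inverse by (intro continuous_intros)

lemma meas_xp: "(\<lambda>z. xp q z) \<in> borel_measurable D"
  by (intro measD borel_measurable_continuous_onI cont_xp)

lemma int_bounded:
  fixes f :: "_ \<Rightarrow> real"
  assumes "f \<in> borel_measurable borel" "AE z in D. norm (fst z) \<le> 1 \<and> \<bar>snd z\<bar> \<le> B \<longrightarrow> \<bar>f z\<bar> \<le> c"
  shows "integrable D f"
proof (rule D.integrable_const_bound[where B=c])
  show "AE x in D. norm (f x) \<le> c" using AEb assms(2) by eventually_elim auto
qed (intro measD assms(1))

lemma int_Aq: "integrable D (\<lambda>z. Aq q z)" and integral_Aq: "(\<integral>z. Aq q z \<partial>D) = (\<Sum>j\<in>UNIV. sm j / pmf q j)"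
proof -
  show "integrable D (\<lambda>z. Aq q z)"
    unfolding Aq_def by (intro Bochner_Integration.integrable_sum integrable_divide_zero int_comp2)
  show "(\<integral>z. Aq q z \<partial>D) = (\<Sum>j\<in>UNIV. sm j / pmf q j)"
    unfolding Aq_def second_moment_def
    by (subst Bochner_Integration.integral_sum) (auto intro!: integrable_divide_zero int_comp2)
qed

lemma int_nx: "integrable D (\<lambda>z. (norm (fst z))^2)" and integral_nx: "(\<integral>z. (norm (fst z))^2 \<partial>D) \<le> 1"
proof -
  show i: "integrable D (\<lambda>z. (norm (fst z))^2)"
  proof (rule int_bounded[where c=1])
    show "(\<lambda>z. (norm (fst z))^2) \<in> borel_measurable borel"
      by (intro borel_measurable_continuous_onI continuous_intros)
    show "AE z in D. norm (fst z) \<le> 1 \<and> \<bar>snd z\<bar> \<le> B \<longrightarrow> \<bar>(norm (fst z))^2\<bar> \<le> 1"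
      by (auto simp: abs_square_le_1)
  qed
  have "(\<integral>z. (norm (fst z))^2 \<partial>D) \<le> (\<integral>z. 1 \<partial>D)"
  proof (rule integral_mono_AE[OF i])
    show "AE z in D. (norm (fst z))^2 \<le> 1" using AEb by eventually_elim (auto simp: abs_square_le_1)
  qed simp
  then show "(\<integral>z. (norm (fst z))^2 \<partial>D) \<le> 1" by (simp add: D.prob_space)
qed

lemma int_g1: fixes w d :: "real^'d" shows "integrable D (\<lambda>z. (w \<bullet> fst z - snd z) * (xp q z \<bullet> d))"
proof (rule int_bounded[where c="(norm w + B) * norm d"])
  show "(\<lambda>z::(real^'d)\<times>real. (w \<bullet> fst z - snd z) * (xp q z \<bullet> d)) \<in> borel_measurable borel"
    by (intro borel_measurable_continuous_onI continuous_intros continuous_on_compose2[OF cont_xp]) auto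
  show "AE z in D. norm (fst z) \<le> 1 \<and> \<bar>snd z\<bar> \<le> B \<longrightarrow> \<bar>(w \<bullet> fst z - snd z) * (xp q z \<bullet> d)\<bar> \<le> (norm w + B) * norm d"
  proof (intro AE_I2 impI)
    fix z :: "(real^'d)\<times>real" assume a: "norm (fst z) \<le> 1 \<and> \<bar>snd z\<bar> \<le> B"
    have "\<bar>w \<bullet> fst z\<bar> \<le> norm w * norm (fst z)" by (rule Cauchy_Schwarz_ineq2)
    also have "\<dots> \<le> norm w" using a mult_left_mono[of "norm (fst z)" 1 "norm w"] by simp
    finally have 1: "\<bar>w \<bullet> fst z - snd z\<bar> \<le> norm w + B" using a by linarith
    have "\<bar>xp q z \<bullet> d\<bar> \<le> norm (xp q z) * norm d" by (rule Cauchy_Schwarz_ineq2)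
    also have "\<dots> \<le> norm d" using a norm_xp[of q z] mult_right_mono[of "norm (xp q z)" 1 "norm d"] by simp
    finally have 2: "\<bar>xp q z \<bullet> d\<bar> \<le> norm d" .
    show "\<bar>(w \<bullet> fst z - snd z) * (xp q z \<bullet> d)\<bar> \<le> (norm w + B) * norm d"
      unfolding abs_mult using 1 2 by (intro mult_mono) auto
  qed
qed

lemma g1_bound: "(\<integral>z. (w \<bullet> fst z - snd z) * (xp qD z \<bullet> (w - ws)) \<partial>D) \<ge> risk D w - risk D ws"
proof -
  have "risk D w - risk D ws = (\<integral>z. sq_loss w z - sq_loss ws z \<partial>D)"
    unfolding risk_def by (simp add: int_sq)
  also have "\<dots> \<le> (\<integral>z. (w \<bullet> fst z - snd z) * (xp qD z \<bullet> (w - ws)) \<partial>D)"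
  proof (rule integral_mono_AE)
    show "integrable D (\<lambda>z. sq_loss w z - sq_loss ws z)" by (simp add: int_sq)
    show "integrable D (\<lambda>z. (w \<bullet> fst z - snd z) * (xp qD z \<bullet> (w - ws)))" by (rule int_g1)
    show "AE z in D. sq_loss w z - sq_loss ws z \<le> (w \<bullet> fst z - snd z) * (xp qD z \<bullet> (w - ws))"
      using AE_xp
    proof eventually_elim
      case (elim z)
      have e: "xp qD z \<bullet> (w - ws) = w \<bullet> fst z - ws \<bullet> fst z"
        using elim by (simp add: inner_diff_right inner_commute)
      define a where "a = w \<bullet> fst z"
      define b where "b = ws \<bullet> fst z"
      have "(a - snd z) * (a - b) - ((1/2) * (a - snd z)^2 - (1/2) * (b - snd z)^2) = (1/2) * (a - b)^2"
        by (simp add: power2_eq_square algebra_simps)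
      moreover have "(1/2) * (a - b)^2 \<ge> 0" by simp
      ultimately have "(1/2) * (a - snd z)^2 - (1/2) * (b - snd z)^2 \<le> (a - snd z) * (a - b)" by linarith
      then show ?case unfolding e sq_loss_def a_def b_def .
    qed
  qed
  finally show ?thesis .
qed


lemma x_step:
  fixes w ws :: "real^'d"
  assumes w: "norm w \<le> B" and ws: "norm ws \<le> B" and k: "k > 0" and eta: "\<eta> > 0" and K: "K \<ge> 0"
  shows "(\<integral>\<^sup>+x. ennreal (risk D w) + (\<integral>\<^sup>+w'. ennreal (K + (1/(2*\<eta>)) * (norm (w' - ws))^2) \<partial>gaerr_step qD B \<eta> k x w) \<partial>D)
     \<le> ennreal (K + risk D ws + \<eta> * (2*B^2*(half_norm sm / real k + 1)) + (1/(2*\<eta>)) * (norm (w - ws))^2)"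
proof -
  define d where "d = w - ws"
  define g1 where "g1 x = (w \<bullet> fst x - snd x) * (xp qD x \<bullet> d)" for x
  define R where "R x = (norm d)^2 - 2*\<eta>*g1 x + \<eta>^2*(4*B^2)*(Aq qD x/real k + (norm (fst x))^2)" for x
  define F where "F x = risk D w + (K + (1/(2*\<eta>)) * R x)" for x
  have ae: "AE x in D. ennreal (risk D w) + (\<integral>\<^sup>+w'. ennreal (K + (1/(2*\<eta>)) * (norm (w' - ws))^2) \<partial>gaerr_step qD B \<eta> k x w) \<le> ennreal (F x) \<and> 0 \<le> F x"
    using AEb
  proof eventually_elim
    case (elim x)
    have os: "(\<integral>\<^sup>+w'. ennreal ((norm (w' - ws))^2) \<partial>gaerr_step qD B \<eta> k x w) \<le> ennreal (R x) \<and> 0 \<le> R x"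
      using one_step[OF Bpos ws w, of x k \<eta> qD] elim k eta by (simp add: R_def g1_def d_def)
    have "(\<integral>\<^sup>+w'. ennreal (K + (1/(2*\<eta>)) * (norm (w' - ws))^2) \<partial>gaerr_step qD B \<eta> k x w) \<le> ennreal (K + (1/(2*\<eta>)) * R x)"
      using os K eta by (intro nn_aff) auto
    then have "ennreal (risk D w) + (\<integral>\<^sup>+w'. ennreal (K + (1/(2*\<eta>)) * (norm (w' - ws))^2) \<partial>gaerr_step qD B \<eta> k x w) \<le> ennreal (risk D w) + ennreal (K + (1/(2*\<eta>)) * R x)"
      by (rule add_left_mono)
    also have "\<dots> = ennreal (F x)"
      unfolding F_def using os K eta risk_nonneg[of w] by (simp add: ennreal_plus)
    finally show ?case using os K eta risk_nonneg[of w] unfolding F_def by simp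
  qed
  have intg1: "integrable D g1" unfolding g1_def by (rule int_g1)
  have intR: "integrable D R" unfolding R_def
    by (intro Bochner_Integration.integrable_add Bochner_Integration.integrable_diff integrable_mult_right
        int_Aq int_nx intg1 integrable_divide_zero) simp
  have intF: "integrable D F" unfolding F_def
    by (intro Bochner_Integration.integrable_add integrable_mult_right intR) simp_all
  have "(\<integral>\<^sup>+x. ennreal (risk D w) + (\<integral>\<^sup>+w'. ennreal (K + (1/(2*\<eta>)) * (norm (w' - ws))^2) \<partial>gaerr_step qD B \<eta> k x w) \<partial>D)
     \<le> (\<integral>\<^sup>+x. ennreal (F x) \<partial>D)"
    using ae by (intro nn_integral_mono_AE) auto
  also have "\<dots> = ennreal (\<integral>x. F x \<partial>D)"
    using ae by (intro nn_integral_eq_integral intF) auto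
  also have "(\<integral>x. F x \<partial>D) = risk D w + K + (1/(2*\<eta>)) * ((norm d)^2 - 2*\<eta>*(\<integral>x. g1 x \<partial>D) + \<eta>^2*(4*B^2)*((\<integral>x. Aq qD x \<partial>D)/real k + (\<integral>x. (norm (fst x))^2 \<partial>D)))"
    unfolding F_def R_def using intg1 int_Aq int_nx intR
    by (simp add: Bochner_Integration.integral_add Bochner_Integration.integral_diff integrable_divide_zero D.prob_space algebra_simps)
  also have "\<dots> \<le> K + risk D ws + \<eta> * (2*B^2*(half_norm sm / real k + 1)) + (1/(2*\<eta>)) * (norm (w - ws))^2"
  proof -
    have g: "(\<integral>x. g1 x \<partial>D) \<ge> risk D w - risk D ws" unfolding g1_def d_def by (rule g1_bound)
    have a: "(\<integral>x. Aq qD x \<partial>D) \<le> half_norm sm" using integral_Aq sum_sm_q by simp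
    have n: "(\<integral>x. (norm (fst x))^2 \<partial>D) \<le> 1" by (rule integral_nx)
    have "(\<integral>x. Aq qD x \<partial>D)/real k + (\<integral>x. (norm (fst x))^2 \<partial>D) \<le> half_norm sm / real k + 1"
      using a n k by (intro add_mono divide_right_mono) auto
    then have h1: "\<eta>^2*(4*B^2)*((\<integral>x. Aq qD x \<partial>D)/real k + (\<integral>x. (norm (fst x))^2 \<partial>D)) \<le> \<eta>^2*(4*B^2)*(half_norm sm / real k + 1)"
      by (intro mult_left_mono) auto
    have h2: "2*\<eta>*(risk D w - risk D ws) \<le> 2*\<eta>*(\<integral>x. g1 x \<partial>D)"
      using g eta by (intro mult_left_mono) auto
    have "(norm d)^2 - 2*\<eta>*(\<integral>x. g1 x \<partial>D) + \<eta>^2*(4*B^2)*((\<integral>x. Aq qD x \<partial>D)/real k + (\<integral>x. (norm (fst x))^2 \<partial>D))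
       \<le> (norm d)^2 - 2*\<eta>*(risk D w - risk D ws) + \<eta>^2*(4*B^2)*(half_norm sm / real k + 1)"
      using h1 h2 by linarith
    then have "(1/(2*\<eta>)) * ((norm d)^2 - 2*\<eta>*(\<integral>x. g1 x \<partial>D) + \<eta>^2*(4*B^2)*((\<integral>x. Aq qD x \<partial>D)/real k + (\<integral>x. (norm (fst x))^2 \<partial>D)))
       \<le> (1/(2*\<eta>)) * ((norm d)^2 - 2*\<eta>*(risk D w - risk D ws) + \<eta>^2*(4*B^2)*(half_norm sm / real k + 1))"
      using eta by (intro mult_left_mono) auto
    also have "\<dots> = (1/(2*\<eta>)) * (norm d)^2 - (risk D w - risk D ws) + \<eta> * (2*B^2*(half_norm sm / real k + 1))"
      using eta by (simp add: field_simps power2_eq_square)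
    finally show ?thesis unfolding d_def by simp
  qed
  finally show ?thesis by (simp add: ennreal_leI)
qed

end


definition RS :: "((real^'d::finite) \<times> real) measure \<Rightarrow> (real^'d) list \<Rightarrow> ennreal" where
  "RS D ws = sum_list (map (\<lambda>v. ennreal (risk D v)) ws)"

definition Psi where
  "Psi D q B \<eta> k w zs = (\<integral>\<^sup>+ws. RS D ws \<partial>gaerr_iter q B \<eta> k w zs)"

lemma Psi_Nil: "Psi D q B \<eta> k w [] = 0"
  by (simp add: Psi_def RS_def)

lemma Psi_Cons: "Psi D q B \<eta> k w (z # zs) = ennreal (risk D w) + (\<integral>\<^sup>+w'. Psi D q B \<eta> k w' zs \<partial>gaerr_step q B \<eta> k z w)"
proof -
  have "Psi D q B \<eta> k w (z # zs) = (\<integral>\<^sup>+w'. (\<integral>\<^sup>+ws. ennreal (risk D w) + RS D ws \<partial>gaerr_iter q B \<eta> k w' zs) \<partial>gaerr_step q B \<eta> k z w)"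
    by (simp add: Psi_def RS_def)
  also have "\<dots> = (\<integral>\<^sup>+w'. ennreal (risk D w) + Psi D q B \<eta> k w' zs \<partial>gaerr_step q B \<eta> k z w)"
    by (simp add: Psi_def nn_integral_add measure_pmf.emeasure_space_1)
  also have "\<dots> = ennreal (risk D w) + (\<integral>\<^sup>+w'. Psi D q B \<eta> k w' zs \<partial>gaerr_step q B \<eta> k z w)"
    by (simp add: nn_integral_add measure_pmf.emeasure_space_1)
  finally show ?thesis .
qed

lemma set_step: "B > 0 \<Longrightarrow> w' \<in> set_pmf (gaerr_step q B \<eta> k z w) \<Longrightarrow> norm w' \<le> B"
  by (auto simp: step_eq Tst_def Let_def intro: proj_norm)

lemma set_iter: "ws \<in> set_pmf (gaerr_iter q B \<eta> k w zs) \<Longrightarrow> length ws = length zs"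
  by (induction zs arbitrary: w ws) auto

context setting
begin

interpretation D: prob_space D by (rule P)

lemma meas_Psi:
  assumes I: "finite I" "set is \<subseteq> I"
  shows "(\<lambda>(w, y). Psi D q B \<eta> k w (map y is)) \<in> borel_measurable (borel \<Otimes>\<^sub>M PiM I (\<lambda>_. D))"
  using I(2)
proof (induction "is")
  case Nil then show ?case by (simp add: Psi_Nil)
next
  case (Cons i "is")
  have IH: "(\<lambda>(w, y). Psi D q B \<eta> k w (map y is)) \<in> borel_measurable (borel \<Otimes>\<^sub>M PiM I (\<lambda>_. D))"
    using Cons by simp
  have Z: "(\<lambda>y. y i) \<in> measurable (PiM I (\<lambda>_. D)) borel"
  proof -
    have "(\<lambda>y. y i) \<in> measurable (PiM I (\<lambda>_. D)) D"
      by (rule measurable_component_singleton) (use Cons.prems in auto)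
    then show ?thesis using measD2 by blast
  qed
  have m1: "(\<lambda>x. ennreal (risk D (fst x))) \<in> borel_measurable (borel \<Otimes>\<^sub>M PiM I (\<lambda>_. D))"
    using meas_risk by measurable
  have m2: "(\<lambda>(w, y). \<integral>\<^sup>+w'. Psi D q B \<eta> k w' (map y is) \<partial>gaerr_step q B \<eta> k (y i) w) \<in> borel_measurable (borel \<Otimes>\<^sub>M PiM I (\<lambda>_. D))"
    by (rule meas_step[OF Bpos IH Z])
  show ?case
    unfolding list.map Psi_Cons using m1 m2 by (simp add: split_beta)
qed


lemma PiM_prob: "prob_space (PiM I (\<lambda>_. D))"
  by (rule prob_space_PiM) (rule P)

lemma main_bound:
  fixes wst :: "real^'d"
  assumes wst: "norm wst \<le> B" and k: "k > 0" and eta: "\<eta> > 0"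
  shows "distinct is \<Longrightarrow> norm w \<le> B \<Longrightarrow>
    (\<integral>\<^sup>+y. Psi D qD B \<eta> k w (map y is) \<partial>PiM (set is) (\<lambda>_. D))
      \<le> ennreal (real (length is) * (risk D wst + \<eta> * (2*B^2*(half_norm sm / real k + 1))) + (1/(2*\<eta>)) * (norm (w - wst))^2)"
proof (induction "is" arbitrary: w)
  case Nil then show ?case by (simp add: Psi_Nil)
next
  case (Cons i "is")
  define C where "C = \<eta> * (2*B^2*(half_norm sm / real k + 1))"
  define K where "K = real (length is) * (risk D wst + C)"
  define I where "I = set is"
  have iI: "i \<notin> I" and fI: "finite I" using Cons.prems by (auto simp: I_def)
  have C0: "C \<ge> 0" unfolding C_def using eta
    by (intro mult_nonneg_nonneg add_nonneg_nonneg divide_nonneg_nonneg) (auto simp: half_norm_def)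
  have K0: "K \<ge> 0" unfolding K_def using C0 risk_nonneg[of wst] by simp
  interpret PS: product_sigma_finite "\<lambda>_. D"
    by unfold_locales
  interpret PI: prob_space "PiM I (\<lambda>_. D)" by (rule PiM_prob)
  have mI: "(\<lambda>(w, y). Psi D qD B \<eta> k w (map y is)) \<in> borel_measurable (borel \<Otimes>\<^sub>M PiM I (\<lambda>_. D))"
    by (rule meas_Psi) (auto simp: I_def fI)
  have mI2: "(\<lambda>(w, y). Psi D qD B \<eta> k w (map y (i#is))) \<in> borel_measurable (borel \<Otimes>\<^sub>M PiM (insert i I) (\<lambda>_. D))"
    by (rule meas_Psi) (auto simp: I_def fI)
  have f1: "(\<lambda>y. Psi D qD B \<eta> k w (map y (i#is))) \<in> borel_measurable (PiM (insert i I) (\<lambda>_. D))"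
    using measurable_Pair2[OF mI2, of w] by simp
  have mapeq: "map (y(i := x)) (i # is) = x # map y is" for x y
    using iI by (auto simp: I_def)
  have "(\<integral>\<^sup>+y. Psi D qD B \<eta> k w (map y (i#is)) \<partial>PiM (set (i#is)) (\<lambda>_. D))
      = (\<integral>\<^sup>+x. (\<integral>\<^sup>+y. Psi D qD B \<eta> k w (map (y(i := x)) (i#is)) \<partial>PiM I (\<lambda>_. D)) \<partial>D)"
    using PS.product_nn_integral_insert_rev[OF fI iI f1] by (simp add: I_def)
  also have "\<dots> = (\<integral>\<^sup>+x. ennreal (risk D w) + (\<integral>\<^sup>+w'. (\<integral>\<^sup>+y. Psi D qD B \<eta> k w' (map y is) \<partial>PiM I (\<lambda>_. D)) \<partial>gaerr_step qD B \<eta> k x w) \<partial>D)"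
  proof (intro nn_integral_cong)
    fix x
    have mx: "(\<lambda>(w, y). \<integral>\<^sup>+w'. Psi D qD B \<eta> k w' (map y is) \<partial>gaerr_step qD B \<eta> k ((\<lambda>_. x) y) w) \<in> borel_measurable (borel \<Otimes>\<^sub>M PiM I (\<lambda>_. D))"
      by (rule meas_step[OF Bpos mI]) simp
    have mx2: "(\<lambda>y. \<integral>\<^sup>+w'. Psi D qD B \<eta> k w' (map y is) \<partial>gaerr_step qD B \<eta> k x w) \<in> borel_measurable (PiM I (\<lambda>_. D))"
      using measurable_Pair2[OF mx, of w] by simp
    have "(\<integral>\<^sup>+y. Psi D qD B \<eta> k w (map (y(i := x)) (i#is)) \<partial>PiM I (\<lambda>_. D))
       = (\<integral>\<^sup>+y. ennreal (risk D w) + (\<integral>\<^sup>+w'. Psi D qD B \<eta> k w' (map y is) \<partial>gaerr_step qD B \<eta> k x w) \<partial>PiM I (\<lambda>_. D))"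
      unfolding mapeq Psi_Cons ..
    also have "\<dots> = ennreal (risk D w) + (\<integral>\<^sup>+y. (\<integral>\<^sup>+w'. Psi D qD B \<eta> k w' (map y is) \<partial>gaerr_step qD B \<eta> k x w) \<partial>PiM I (\<lambda>_. D))"
      using mx2 by (simp add: nn_integral_add PI.emeasure_space_1)
    also have "(\<integral>\<^sup>+y. (\<integral>\<^sup>+w'. Psi D qD B \<eta> k w' (map y is) \<partial>gaerr_step qD B \<eta> k x w) \<partial>PiM I (\<lambda>_. D))
      = (\<integral>\<^sup>+w'. (\<integral>\<^sup>+y. Psi D qD B \<eta> k w' (map y is) \<partial>PiM I (\<lambda>_. D)) \<partial>gaerr_step qD B \<eta> k x w)"
    proof -
      interpret PP: pair_sigma_finite "measure_pmf (gaerr_step qD B \<eta> k x w)" "PiM I (\<lambda>_. D)"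
        by (intro pair_sigma_finite.intro measure_pmf.sigma_finite_measure_axioms PI.sigma_finite_measure_axioms)
      have "(\<lambda>x. (fst x, snd x)) \<in> measurable (measure_pmf (gaerr_step qD B \<eta> k x w) \<Otimes>\<^sub>M PiM I (\<lambda>_. D)) (borel \<Otimes>\<^sub>M PiM I (\<lambda>_. D))"
      proof (intro measurable_Pair)
        have "(\<lambda>x. x) \<in> measurable (measure_pmf (gaerr_step qD B \<eta> k x w)) (borel :: (real^'d) measure)" by simp
        from measurable_compose[OF measurable_fst this]
        show "fst \<in> borel_measurable (measure_pmf (gaerr_step qD B \<eta> k x w) \<Otimes>\<^sub>M PiM I (\<lambda>_. D))" .
      qed simp
      from measurable_compose[OF this mI]
      have "(\<lambda>(w', y). Psi D qD B \<eta> k w' (map y is)) \<in> borel_measurable (measure_pmf (gaerr_step qD B \<eta> k x w) \<Otimes>\<^sub>M PiM I (\<lambda>_. D))"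
        by (simp add: split_beta)
      then show ?thesis by (rule PP.Fubini')
    qed
    finally show "(\<integral>\<^sup>+y. Psi D qD B \<eta> k w (map (y(i := x)) (i#is)) \<partial>PiM I (\<lambda>_. D))
       = ennreal (risk D w) + (\<integral>\<^sup>+w'. (\<integral>\<^sup>+y. Psi D qD B \<eta> k w' (map y is) \<partial>PiM I (\<lambda>_. D)) \<partial>gaerr_step qD B \<eta> k x w)" .
  qed
  also have "\<dots> \<le> (\<integral>\<^sup>+x. ennreal (risk D w) + (\<integral>\<^sup>+w'. ennreal (K + (1/(2*\<eta>)) * (norm (w' - wst))^2) \<partial>gaerr_step qD B \<eta> k x w) \<partial>D)"
  proof (rule nn_integral_mono)
    fix x
    show "ennreal (risk D w) + (\<integral>\<^sup>+w'. (\<integral>\<^sup>+y. Psi D qD B \<eta> k w' (map y is) \<partial>PiM I (\<lambda>_. D)) \<partial>gaerr_step qD B \<eta> k x w)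
      \<le> ennreal (risk D w) + (\<integral>\<^sup>+w'. ennreal (K + (1/(2*\<eta>)) * (norm (w' - wst))^2) \<partial>gaerr_step qD B \<eta> k x w)"
    proof (rule add_left_mono, rule nn_integral_mono_AE)
    show "AE w' in gaerr_step qD B \<eta> k x w. (\<integral>\<^sup>+y. Psi D qD B \<eta> k w' (map y is) \<partial>PiM I (\<lambda>_. D)) \<le> ennreal (K + (1/(2*\<eta>)) * (norm (w' - wst))^2)"
      unfolding AE_measure_pmf_iff
    proof
      fix w' assume "w' \<in> set_pmf (gaerr_step qD B \<eta> k x w)"
      then have "norm w' \<le> B" by (rule set_step[OF Bpos])
      with Cons.IH[of w'] Cons.prems show "(\<integral>\<^sup>+y. Psi D qD B \<eta> k w' (map y is) \<partial>PiM I (\<lambda>_. D)) \<le> ennreal (K + (1/(2*\<eta>)) * (norm (w' - wst))^2)"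
        by (simp add: I_def K_def C_def)
    qed
    qed
  qed
  also have "\<dots> \<le> ennreal (K + risk D wst + C + (1/(2*\<eta>)) * (norm (w - wst))^2)"
    unfolding C_def by (rule x_step[OF Cons.prems(2) wst k eta K0])
  also have "K + risk D wst + C = real (length (i#is)) * (risk D wst + C)"
    by (simp add: K_def algebra_simps)
  finally show ?case by (simp add: C_def)
qed

end


lemma RS_eq: "RS D ws = ennreal (sum_list (map (risk D) ws))" if "\<And>v. risk D v \<ge> 0"
  unfolding RS_def
proof (induction ws)
  case (Cons a ws)
  have "0 \<le> sum_list (map (risk D) ws)" by (rule sum_list_nonneg) (auto simp: that)
  then show ?case using Cons that by (simp add: ennreal_plus)
qed simp

context setting
begin

interpretation D: prob_space D by (rule P)

lemma jensen:
  assumes "ws \<noteq> []"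
  shows "risk D ((1 / real (length ws)) *\<^sub>R sum_list ws) \<le> (1 / real (length ws)) * sum_list (map (risk D) ws)"
proof -
  define n where "n = length ws"
  have n: "n > 0" using assms by (simp add: n_def)
  have sl: "sum_list ws = (\<Sum>t<n. ws ! t)" unfolding n_def by (simp add: sum_list_sum_nth atLeast0LessThan)
  have slr: "sum_list (map (risk D) ws) = (\<Sum>t<n. risk D (ws ! t))"
    unfolding n_def by (simp add: sum_list_sum_nth atLeast0LessThan)
  have pw: "sq_loss ((1 / real n) *\<^sub>R sum_list ws) z \<le> (1 / real n) * (\<Sum>t<n. sq_loss (ws ! t) z)" for z
  proof -
    define b where "b t = ws ! t \<bullet> fst z - snd z" for t
    have e: "(1 / real n) *\<^sub>R sum_list ws \<bullet> fst z - snd z = (1 / real n) * (\<Sum>t<n. b t)"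
      using n by (simp add: sl b_def inner_sum_left sum_subtractf field_simps)
    have cs: "(\<Sum>t<n. 1 * b t)^2 \<le> (\<Sum>t<n. 1^2) * (\<Sum>t<n. (b t)^2)"
      by (rule Cauchy_Schwarz_ineq_sum)
    have "((1 / real n) * (\<Sum>t<n. b t))^2 = (1 / real n)^2 * (\<Sum>t<n. b t)^2" by (rule power_mult_distrib)
    also have "\<dots> \<le> (1 / real n)^2 * (real n * (\<Sum>t<n. (b t)^2))"
      using cs by (intro mult_left_mono) auto
    also have "\<dots> = (1 / real n) * (\<Sum>t<n. (b t)^2)" using n by (simp add: power2_eq_square)
    finally have f: "((1 / real n) * (\<Sum>t<n. b t))^2 \<le> (1 / real n) * (\<Sum>t<n. (b t)^2)" .
    have "(\<Sum>t<n. sq_loss (ws ! t) z) = (1/2) * (\<Sum>t<n. (b t)^2)"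
      by (simp add: sq_loss_def b_def sum_distrib_left)
    then show ?thesis unfolding sq_loss_def e using f by simp
  qed
  have "risk D ((1 / real n) *\<^sub>R sum_list ws) \<le> (\<integral>z. (1 / real n) * (\<Sum>t<n. sq_loss (ws ! t) z) \<partial>D)"
    unfolding risk_def
    by (intro integral_mono pw int_sq integrable_mult_right Bochner_Integration.integrable_sum)
  also have "\<dots> = (1 / real n) * (\<Sum>t<n. risk D (ws ! t))"
    unfolding risk_def by (simp add: int_sq Bochner_Integration.integral_sum)
  finally show ?thesis unfolding slr n_def .
qed

end

theorem theorem2:
  fixes D :: "((real^'d::finite) \<times> real) measure"
    and B :: real and m k :: nat and w1 wstar :: "real^'d"
  assumes "prob_space D"
    and "sets D = sets borel"
    and "AE z in D. norm (fst z) \<le> 1 \<and> \<bar>snd z\<bar> \<le> B"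
    and "B > 0" and "m > 0" and "k > 0"
    and "w1 \<noteq> 0" and "norm w1 \<le> B"
    and "norm wstar \<le> B"
  defines "\<eta> \<equiv> 1 / sqrt (real m * (half_norm (second_moment D) / real k + 1))"
  shows "(\<integral>\<^sup>+ S. (\<integral>\<^sup>+ w. ennreal (risk D w)
              \<partial>measure_pmf (gaerr (ddaerr_q D) B \<eta> k w1 (map S [0..<m])))
          \<partial>(PiM {..<m} (\<lambda>_. D)))
         \<le> ennreal (risk D wstar
              + 4 * B^2 / sqrt (real m) * sqrt (half_norm (second_moment D) / real k + 1))"
proof -
  interpret S: setting D B by (rule setting.intro[OF assms(1-4)])
  interpret D: prob_space D by (rule assms(1))
  define G where "G = half_norm (second_moment D) / real k + 1"
  have G1: "G \<ge> 1" unfolding G_def half_norm_def by simp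
  have m: "real m > 0" using assms(5) by simp
  have eta: "\<eta> > 0" unfolding \<eta>_def G_def[symmetric] using G1 m by simp
  define C where "C = \<eta> * (2*B^2*(half_norm (second_moment D) / real k + 1))"
  define L where "L = risk D wstar"
  let ?q = "ddaerr_q D"
  have inner: "(\<integral>\<^sup>+ w. ennreal (risk D w) \<partial>measure_pmf (gaerr ?q B \<eta> k w1 (map S [0..<m])))
     \<le> ennreal (1 / real m) * Psi D ?q B \<eta> k w1 (map S [0..<m])" for S
  proof -
    have "(\<integral>\<^sup>+ w. ennreal (risk D w) \<partial>measure_pmf (gaerr ?q B \<eta> k w1 (map S [0..<m])))
      = (\<integral>\<^sup>+ ws. ennreal (risk D ((1 / real (length ws)) *\<^sub>R sum_list ws)) \<partial>gaerr_iter ?q B \<eta> k w1 (map S [0..<m]))"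
      by (simp add: gaerr_def)
    also have "\<dots> \<le> (\<integral>\<^sup>+ ws. ennreal (1 / real m) * RS D ws \<partial>gaerr_iter ?q B \<eta> k w1 (map S [0..<m]))"
    proof (rule nn_integral_mono_AE, unfold AE_measure_pmf_iff, intro ballI)
      fix ws assume "ws \<in> set_pmf (gaerr_iter ?q B \<eta> k w1 (map S [0..<m]))"
      then have l: "length ws = m" using set_iter by fastforce
      then have ne: "ws \<noteq> []" using assms(5) by auto
      have "risk D ((1 / real (length ws)) *\<^sub>R sum_list ws) \<le> (1 / real m) * sum_list (map (risk D) ws)"
        using S.jensen[OF ne] l by simp
      then have "ennreal (risk D ((1 / real (length ws)) *\<^sub>R sum_list ws)) \<le> ennreal ((1 / real m) * sum_list (map (risk D) ws))"
        by (rule ennreal_leI)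
      also have "\<dots> = ennreal (1 / real m) * RS D ws"
      proof -
        have s0: "0 \<le> sum_list (map (risk D) ws)" by (rule sum_list_nonneg) (auto simp: S.risk_nonneg)
        have "RS D ws = ennreal (sum_list (map (risk D) ws))" by (rule RS_eq) (rule S.risk_nonneg)
        then show ?thesis using s0 by (simp add: ennreal_mult[symmetric])
      qed
      finally show "ennreal (risk D ((1 / real (length ws)) *\<^sub>R sum_list ws)) \<le> ennreal (1 / real m) * RS D ws" .
    qed
    also have "\<dots> = ennreal (1 / real m) * Psi D ?q B \<eta> k w1 (map S [0..<m])"
      by (simp add: Psi_def nn_integral_cmult)
    finally show ?thesis .
  qed
  have mP: "(\<lambda>S. Psi D ?q B \<eta> k w1 (map S [0..<m])) \<in> borel_measurable (PiM {..<m} (\<lambda>_. D))"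
    using measurable_Pair2[OF S.meas_Psi[of "{..<m}" "[0..<m]" ?q \<eta> k], of w1] by (auto simp: atLeast0LessThan)
  have "(\<integral>\<^sup>+ S. (\<integral>\<^sup>+ w. ennreal (risk D w) \<partial>measure_pmf (gaerr ?q B \<eta> k w1 (map S [0..<m]))) \<partial>(PiM {..<m} (\<lambda>_. D)))
      \<le> (\<integral>\<^sup>+ S. ennreal (1 / real m) * Psi D ?q B \<eta> k w1 (map S [0..<m]) \<partial>(PiM {..<m} (\<lambda>_. D)))"
    by (intro nn_integral_mono inner)
  also have "\<dots> = ennreal (1 / real m) * (\<integral>\<^sup>+ S. Psi D ?q B \<eta> k w1 (map S [0..<m]) \<partial>(PiM {..<m} (\<lambda>_. D)))"
    by (rule nn_integral_cmult[OF mP])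
  also have "\<dots> \<le> ennreal (1 / real m) * ennreal (real m * (L + C) + (1/(2*\<eta>)) * (norm (w1 - wstar))^2)"
  proof (rule mult_left_mono)
    show "(\<integral>\<^sup>+ S. Psi D ?q B \<eta> k w1 (map S [0..<m]) \<partial>(PiM {..<m} (\<lambda>_. D))) \<le> ennreal (real m * (L + C) + (1/(2*\<eta>)) * (norm (w1 - wstar))^2)"
      using S.main_bound[OF assms(9) assms(6) eta, of "[0..<m]" w1] assms(8)
      by (simp add: L_def C_def atLeast0LessThan)
  qed simp
  also have "\<dots> = ennreal ((1 / real m) * (real m * (L + C) + (1/(2*\<eta>)) * (norm (w1 - wstar))^2))"
  proof -
    have C0: "C \<ge> 0" unfolding C_def using eta by (intro mult_nonneg_nonneg) (auto simp: half_norm_def)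
    have "0 \<le> real m * (L + C) + (1/(2*\<eta>)) * (norm (w1 - wstar))^2"
      using C0 eta S.risk_nonneg[of wstar] unfolding L_def by (intro add_nonneg_nonneg mult_nonneg_nonneg) auto
    then show ?thesis by (intro ennreal_mult[symmetric]) auto
  qed
  also have "\<dots> \<le> ennreal (risk D wstar + 4 * B^2 / sqrt (real m) * sqrt (half_norm (second_moment D) / real k + 1))"
  proof (rule ennreal_leI)
    have nd: "norm (w1 - wstar) \<le> 2 * B"
      using norm_triangle_ineq4[of w1 wstar] assms(8,9) by simp
    then have nd2: "(norm (w1 - wstar))^2 \<le> 4 * B^2"
    proof -
      have "(norm (w1 - wstar))^2 \<le> (2 * B)^2" by (rule power_mono[OF nd]) simp
      then show ?thesis by (simp add: power_mult_distrib)
    qed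
    have "(1 / real m) * (real m * (L + C) + (1/(2*\<eta>)) * (norm (w1 - wstar))^2)
        = L + C + (norm (w1 - wstar))^2 / (2 * \<eta> * real m)"
      using m eta by (simp add: field_simps)
    also have "\<dots> \<le> L + C + 4 * B^2 / (2 * \<eta> * real m)"
      using nd2 m eta by (intro add_left_mono divide_right_mono) auto
    finally have A: "(1 / real m) * (real m * (L + C) + (1/(2*\<eta>)) * (norm (w1 - wstar))^2) \<le> L + C + 4 * B^2 / (2 * \<eta> * real m)" .
    have Bq: "C + 4 * B^2 / (2 * \<eta> * real m) = 4 * B^2 / sqrt (real m) * sqrt G"
    proof -
      have sG: "sqrt G * sqrt G = G" using G1 by simp
      have sm: "sqrt (real m) * sqrt (real m) = real m" using m by simp
      have sG': "sqrt G * (sqrt G * x) = G * x" for x using sG by (simp add: mult.assoc[symmetric])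
      have sm': "sqrt (real m) * (sqrt (real m) * x) = real m * x" for x using sm by (simp add: mult.assoc[symmetric])
      have e: "\<eta> = 1 / (sqrt (real m) * sqrt G)" unfolding \<eta>_def G_def[symmetric] by (simp add: real_sqrt_mult)
      have p1: "sqrt G > 0" "sqrt (real m) > 0" using G1 m by auto
      show ?thesis unfolding C_def G_def[symmetric] e
        using p1 by (simp add: field_simps power2_eq_square sG' sm')
    qed
    from A Bq have "(1 / real m) * (real m * (L + C) + (1/(2*\<eta>)) * (norm (w1 - wstar))^2) \<le> L + 4 * B^2 / sqrt (real m) * sqrt G"
      by linarith
    then show "(1 / real m) * (real m * (L + C) + (1/(2*\<eta>)) * (norm (w1 - wstar))^2)
      \<le> risk D wstar + 4 * B^2 / sqrt (real m) * sqrt (half_norm (second_moment D) / real k + 1)"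
      by (simp only: L_def G_def)
  qed
  finally show ?thesis .
qed

end
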